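(* Let $I=\Delta[\Delta,\Delta]\Delta$. Each of the following subspaces $U$ is a subalgebra of $\Delta$ containing $I$, and the listed elements form a basis for a complement of $I$ in $U$ (i.e. a basis of a subspace $U'$ with $U=U'+I$ a direct sum): $U=\Delta$: $A^iB^jC^k$ ($i,j,k\geq0$); $U=\langle A,B\rangle$: $A^iB^j$ ($i,j\geq0$); $U=\langle B,C\rangle$: $B^jC^k$ ($j,k\geq0$); $U=\langle A,C\rangle$: $A^iC^k$ ($i,k\geq0$); $U=\langle A,B\rangle\cap\langle A,C\rangle$: $A^i$ ($i\geq0$); $U=\langle A,B\rangle\cap\langle B,C\rangle$: $B^j$ ($j\geq0$); $U=\langle A,C\rangle\cap\langle B,C\rangle$: $C^k$ ($k\geq0$); $U=\langle A,B\rangle\cap\langle B,C\rangle\cap\langle A,C\rangle$: $1$.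
   Context: Let $\mathbb F$ be a field and fix a nonzero $q\in\mathbb F$ with $q^4\neq 1$. The universal Askey--Wilson algebra $\Delta$ is the associative $\mathbb F$-algebra with 1 with generators $A,B,C$ subject to the relations that each of $A+\frac{qBC-q^{-1}CB}{q^2-q^{-2}}$, $B+\frac{qCA-q^{-1}AC}{q^2-q^{-2}}$, $C+\frac{qAB-q^{-1}BA}{q^2-q^{-2}}$ is central. $[\Delta,\Delta]={\rm Span}\{uv-vu:u,v\in\Delta\}$ and $\Delta[\Delta,\Delta]\Delta$ is the 2-sided ideal generated by it. For $\mathcal S\subseteq\Delta$, $\langle\mathcal S\rangle$ denotes the $\mathbb F$-subalgebra of $\Delta$ generated by $\mathcal S$. *)

theory Defs
  imports "HOL-Library.Poly_Mapping"
begin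

datatype gen = GA | GB | GC

datatype fword = FW "gen list"

instantiation fword :: monoid_add
begin
fun plus_fword :: "fword \<Rightarrow> fword \<Rightarrow> fword" where
  "plus_fword (FW a) (FW b) = FW (a @ b)"
definition zero_fword :: fword where "zero_fword = FW []"
instance
proof
  fix a b c :: fword
  show "a + b + c = a + (b + c)" by (cases a; cases b; cases c) simp
  show "0 + a = a" by (cases a) (simp add: zero_fword_def)
  show "a + 0 = a" by (cases a) (simp add: zero_fword_def)
qed
end

type_synonym 'k free_alg = "fword \<Rightarrow>\<^sub>0 'k"

definition sc :: "'k::field \<Rightarrow> 'k free_alg \<Rightarrow> 'k free_alg" where
  "sc c x = Poly_Mapping.single 0 c * x"

definition gA :: "'k::field free_alg" where "gA = Poly_Mapping.single (FW [GA]) 1"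
definition gB :: "'k::field free_alg" where "gB = Poly_Mapping.single (FW [GB]) 1"
definition gC :: "'k::field free_alg" where "gC = Poly_Mapping.single (FW [GC]) 1"

inductive_set ideal_gen :: "'k::field free_alg set \<Rightarrow> 'k free_alg set" for S where
  zero: "0 \<in> ideal_gen S"
| gen: "s \<in> S \<Longrightarrow> a * s * b \<in> ideal_gen S"
| add: "x \<in> ideal_gen S \<Longrightarrow> y \<in> ideal_gen S \<Longrightarrow> x + y \<in> ideal_gen S"

inductive_set subalg_gen :: "'k::field free_alg set \<Rightarrow> 'k free_alg set" for S where
  gen: "s \<in> S \<Longrightarrow> s \<in> subalg_gen S"
| one: "1 \<in> subalg_gen S"
| scal: "x \<in> subalg_gen S \<Longrightarrow> sc c x \<in> subalg_gen S"
| add: "x \<in> subalg_gen S \<Longrightarrow> y \<in> subalg_gen S \<Longrightarrow> x + y \<in> subalg_gen S"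
| mult: "x \<in> subalg_gen S \<Longrightarrow> y \<in> subalg_gen S \<Longrightarrow> x * y \<in> subalg_gen S"

definition is_subalg :: "'k::field free_alg set \<Rightarrow> bool" where
  "is_subalg U \<longleftrightarrow> 1 \<in> U \<and> (\<forall>x\<in>U. \<forall>y\<in>U. x + y \<in> U \<and> x * y \<in> U)
                    \<and> (\<forall>c. \<forall>x\<in>U. sc c x \<in> U)"

definition lin_comb :: "('i \<Rightarrow> 'k::field free_alg) \<Rightarrow> 'i set \<Rightarrow> ('i \<Rightarrow> 'k) \<Rightarrow> 'k free_alg" where
  "lin_comb b F c = (\<Sum>t\<in>F. sc (c t) (b t))"

text \<open>The three elements required to be central.\<close>
definition awA :: "'k::field \<Rightarrow> 'k free_alg" where
  "awA q = gA + sc (inverse (q^2 - inverse q ^ 2)) (sc q (gB * gC) - sc (inverse q) (gC * gB))"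
definition awB :: "'k::field \<Rightarrow> 'k free_alg" where
  "awB q = gB + sc (inverse (q^2 - inverse q ^ 2)) (sc q (gC * gA) - sc (inverse q) (gA * gC))"
definition awC :: "'k::field \<Rightarrow> 'k free_alg" where
  "awC q = gC + sc (inverse (q^2 - inverse q ^ 2)) (sc q (gA * gB) - sc (inverse q) (gB * gA))"

text \<open>Defining ideal \<open>J\<close> of \<open>\<Delta>\<close>: \<open>\<Delta> = free_alg / J\<close>.\<close>
definition AW_ideal :: "'k::field \<Rightarrow> 'k free_alg set" where
  "AW_ideal q = ideal_gen {z * x - x * z | z x. z \<in> {awA q, awB q, awC q}}"

text \<open>Preimage in the free algebra of \<open>I = \<Delta>[\<Delta>,\<Delta>]\<Delta>\<close>.\<close>
definition comm_ideal_lift :: "'k::field \<Rightarrow> 'k free_alg set" where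
  "comm_ideal_lift q = ideal_gen ({x * y - y * x | x y. True} \<union> AW_ideal q)"

text \<open>Preimage in the free algebra of the subalgebra \<open>\<langle>S\<rangle>\<close> of \<open>\<Delta>\<close>
  generated by the images of the elements of \<open>S\<close>.\<close>
definition gen_lift :: "'k::field \<Rightarrow> 'k free_alg set \<Rightarrow> 'k free_alg set" where
  "gen_lift q S = {u + j | u j. u \<in> subalg_gen S \<and> j \<in> AW_ideal q}"

text \<open>For preimages \<open>I \<subseteq> U\<close>: the images of \<open>b t\<close> (\<open>t \<in> T\<close>) in \<open>\<Delta>\<close>
  form a basis of a subspace \<open>U'\<close> of \<open>U/J\<close> with \<open>U/J = U' \<oplus> I/J\<close>.\<close>
definition complement_basis ::
  "'k::field free_alg set \<Rightarrow> 'k free_alg set \<Rightarrow> 'i set \<Rightarrow> ('i \<Rightarrow> 'k free_alg) \<Rightarrow> bool" where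
  "complement_basis I U T b \<longleftrightarrow>
     (\<forall>t\<in>T. b t \<in> U) \<and>
     (\<forall>u\<in>U. \<exists>F c y. finite F \<and> F \<subseteq> T \<and> y \<in> I \<and> u = lin_comb b F c + y) \<and>
     (\<forall>F c. finite F \<and> F \<subseteq> T \<and> lin_comb b F c \<in> I \<longrightarrow> (\<forall>t\<in>F. c t = 0))"

end

theory Submission
  imports Defs "HOL-Library.Product_Plus"
begin


lemma poly_expand: "(x :: 'a::monoid_add \<Rightarrow>\<^sub>0 'b::semiring_0) = (\<Sum>w\<in>Poly_Mapping.keys x. Poly_Mapping.single w (Poly_Mapping.lookup x w))"
proof (rule poly_mapping_eqI)
  fix k
  show "Poly_Mapping.lookup x k = Poly_Mapping.lookup (\<Sum>w\<in>Poly_Mapping.keys x. Poly_Mapping.single w (Poly_Mapping.lookup x w)) k"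
    by (cases "k \<in> Poly_Mapping.keys x") (simp_all add: Poly_Mapping.lookup_sum lookup_single when_def in_keys_iff)
qed

lemma single0_central: "(x :: 'k::field free_alg) * Poly_Mapping.single 0 c = Poly_Mapping.single 0 c * x"
proof -
  have "x * Poly_Mapping.single 0 c = (\<Sum>w\<in>Poly_Mapping.keys x. Poly_Mapping.single w (Poly_Mapping.lookup x w) * Poly_Mapping.single 0 c)"
    by (subst poly_expand) (simp add: sum_distrib_right)
  also have "\<dots> = (\<Sum>w\<in>Poly_Mapping.keys x. Poly_Mapping.single 0 c * Poly_Mapping.single w (Poly_Mapping.lookup x w))"
    by (simp add: mult_single mult.commute)
  also have "\<dots> = Poly_Mapping.single 0 c * x"
    by (subst (2) poly_expand) (simp add: sum_distrib_left)
  finally show ?thesis .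
qed

lemma sc_add[simp]: "sc c (x + y) = sc c x + sc c y" by (simp add: sc_def distrib_left)
lemma sc_diff[simp]: "sc c (x - y) = sc c x - sc c y" by (simp add: sc_def right_diff_distrib)
lemma sc_minus[simp]: "sc c (- x) = - sc c x" by (simp add: sc_def)
lemma sc_mult_left[simp]: "sc c x * y = sc c (x * y)" by (simp add: sc_def mult.assoc)
lemma sc_mult_right[simp]: "x * sc c y = sc c (x * y)"
  by (simp add: sc_def mult.assoc[symmetric] single0_central)
lemma sc_sc[simp]: "sc c (sc d x) = sc (c * d) x" by (simp add: sc_def mult.assoc[symmetric] mult_single)
lemma sc_one[simp]: "sc 1 x = x" by (simp add: sc_def)
lemma sc_zero[simp]: "sc 0 x = 0" by (simp add: sc_def)
lemma sc_zero2[simp]: "sc c 0 = 0" by (simp add: sc_def)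
lemma sc_add_scalar: "sc (c + d) x = sc c x + sc d x" by (simp add: sc_def single_add distrib_right)
lemma sc_diff_scalar: "sc (c - d) x = sc c x - sc d x" by (simp add: sc_def single_diff left_diff_distrib)
lemma sc_neg_scalar: "sc (- c) x = - sc c x" by (simp add: sc_def single_uminus)


lemma ideal_gen_lmult: "x \<in> ideal_gen R \<Longrightarrow> a * x \<in> ideal_gen R"
proof (induction rule: ideal_gen.induct)
  case zero then show ?case by (simp add: ideal_gen.zero)
next
  case (gen s a' b) then show ?case using ideal_gen.gen[of s R "a*a'" b] by (simp add: mult.assoc)
next
  case (add x y) then show ?case by (simp add: distrib_left ideal_gen.add)
qed

lemma ideal_gen_rmult: "x \<in> ideal_gen R \<Longrightarrow> x * a \<in> ideal_gen R"
proof (induction rule: ideal_gen.induct)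
  case zero then show ?case by (simp add: ideal_gen.zero)
next
  case (gen s a' b) then show ?case using ideal_gen.gen[of s R a' "b*a"] by (simp add: mult.assoc)
next
  case (add x y) then show ?case by (simp add: distrib_right ideal_gen.add)
qed

lemma ideal_gen_mem: "s \<in> R \<Longrightarrow> s \<in> ideal_gen R"
  using ideal_gen.gen[of s R 1 1] by simp

lemma ideal_gen_mono: "x \<in> ideal_gen R \<Longrightarrow> R \<subseteq> R' \<Longrightarrow> x \<in> ideal_gen R'"
proof (induction rule: ideal_gen.induct)
  case zero then show ?case by (simp add: ideal_gen.zero)
next
  case (gen s a b) then show ?case by (auto intro: ideal_gen.gen)
next
  case (add x y) then show ?case by (simp add: ideal_gen.add)
qed

lemma subalg_gen_diff: "x \<in> subalg_gen S \<Longrightarrow> y \<in> subalg_gen S \<Longrightarrow> x - y \<in> subalg_gen S"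
proof -
  assume "x \<in> subalg_gen S" "y \<in> subalg_gen S"
  then have "x + sc (-1) y \<in> subalg_gen S" by (intro subalg_gen.add subalg_gen.scal)
  then show ?thesis by (simp add: sc_neg_scalar)
qed

lemma subalg_gen_zero: "0 \<in> subalg_gen S"
  using subalg_gen.scal[OF subalg_gen.one[of S], of 0] by simp

lemma subalg_gen_pow: "x \<in> subalg_gen S \<Longrightarrow> x ^ n \<in> subalg_gen S"
  by (induction n) (auto intro: subalg_gen.intros)

lemma subalg_gen_mono: "x \<in> subalg_gen S \<Longrightarrow> S \<subseteq> S' \<Longrightarrow> x \<in> subalg_gen S'"
  by (induction rule: subalg_gen.induct) (auto intro: subalg_gen.intros)

inductive_set SGset :: "'k::field free_alg set \<Rightarrow> 'k free_alg set \<Rightarrow> 'k free_alg \<Rightarrow> 'k free_alg set"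
  for S J G where
  base: "s \<in> S \<Longrightarrow> s * G ^ k \<in> SGset S J G"
| jj: "j \<in> J \<Longrightarrow> j \<in> SGset S J G"
| add: "x \<in> SGset S J G \<Longrightarrow> y \<in> SGset S J G \<Longrightarrow> x + y \<in> SGset S J G"

inductive_set SWset :: "'k::field free_alg set \<Rightarrow> 'k free_alg set \<Rightarrow> 'k free_alg \<Rightarrow> 'k free_alg set"
  for S J c where
  jj: "j \<in> J \<Longrightarrow> j \<in> SWset S J c"
| gen: "s \<in> S \<Longrightarrow> s' \<in> S \<Longrightarrow> s * c * s' \<in> SWset S J c"
| add: "x \<in> SWset S J c \<Longrightarrow> y \<in> SWset S J c \<Longrightarrow> x + y \<in> SWset S J c"




context
  fixes J :: "'k::field free_alg set" and X Y Z G Gx :: "'k free_alg" and e q q' :: 'k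
  assumes J0: "0 \<in> J" and Jadd: "\<And>x y. x \<in> J \<Longrightarrow> y \<in> J \<Longrightarrow> x + y \<in> J"
    and Jl: "\<And>x a. x \<in> J \<Longrightarrow> a * x \<in> J" and Jr: "\<And>x a. x \<in> J \<Longrightarrow> x * a \<in> J"
    and hZ: "Z = G - sc e (sc q (X * Y) - sc q' (Y * X))"
    and hGx: "Gx = X + sc e (sc q (Y * Z) - sc q' (Z * Y))"
    and cG: "\<And>w. G * w - w * G \<in> J" and cGx: "\<And>w. Gx * w - w * Gx \<in> J"
    and e0: "e \<noteq> 0" and qq: "q \<noteq> q'"
    and gens: "\<And>w. w \<in> subalg_gen {X, Y, Z}"
begin

abbreviation "SS \<equiv> subalg_gen {X, Y}"
abbreviation "TT \<equiv> {u + j | u j. u \<in> SS \<and> j \<in> J}"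
abbreviation "cc \<equiv> X * Y - Y * X"
abbreviation "SG \<equiv> SGset SS J G"
abbreviation "SW \<equiv> SWset SS J cc"

lemma Jneg: "x \<in> J \<Longrightarrow> - x \<in> J"
  using Jl[of x "-1"] by simp
lemma Jdiff: "x \<in> J \<Longrightarrow> y \<in> J \<Longrightarrow> x - y \<in> J"
  using Jadd[of x "-y"] Jneg[of y] by simp
lemma Jsc: "x \<in> J \<Longrightarrow> sc c x \<in> J"
  unfolding sc_def by (rule Jl)

lemma S_X: "X \<in> SS" and S_Y: "Y \<in> SS" by (auto intro: subalg_gen.gen)
lemma S_sc1: "sc c 1 \<in> SS" by (intro subalg_gen.scal subalg_gen.one)

lemma cGpow: "G ^ k * w - w * G ^ k \<in> J"
proof (induction k)
  case 0 then show ?case using J0 by simp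
next
  case (Suc k)
  have "G ^ Suc k * w - w * G ^ Suc k = G * (G ^ k * w - w * G ^ k) + (G * w - w * G) * G ^ k"
    by (simp add: algebra_simps)
  then show ?case using Suc Jl Jr cG Jadd by metis
qed

lemma SG_addJ: "x \<in> SG \<Longrightarrow> y - x \<in> J \<Longrightarrow> y \<in> SG"
proof -
  assume a: "x \<in> SG" "y - x \<in> J"
  have "x + (y - x) \<in> SG" by (rule SGset.add[OF a(1) SGset.jj[OF a(2)]])
  then show ?thesis by simp
qed

lemma SG_mult_base: "y \<in> SG \<Longrightarrow> s \<in> SS \<Longrightarrow> s * G ^ k * y \<in> SG"
proof (induction y rule: SGset.induct)
  case (base s' m)
  have "s * G ^ k * (s' * G ^ m) - (s * s') * G ^ (k + m) = s * (G ^ k * s' - s' * G ^ k) * G ^ m"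
    by (simp add: algebra_simps power_add)
  moreover have "s * (G ^ k * s' - s' * G ^ k) * G ^ m \<in> J" using cGpow Jl Jr by blast
  moreover have "(s * s') * G ^ (k + m) \<in> SG" using base by (intro SGset.base subalg_gen.mult)
  ultimately show ?case using SG_addJ by metis
next
  case (jj j) then show ?case using Jl SGset.jj by blast
next
  case (add x y) then show ?case by (simp add: distrib_left SGset.add)
qed

lemma SG_mult: "x \<in> SG \<Longrightarrow> y \<in> SG \<Longrightarrow> x * y \<in> SG"
proof (induction x rule: SGset.induct)
  case (base s k) then show ?case using SG_mult_base by blast
next
  case (jj j) then show ?case using Jr SGset.jj by blast
next
  case (add x1 x2) then show ?case by (simp add: distrib_right SGset.add)
qed

lemma P_S: "sc e (sc q (X * Y) - sc q' (Y * X)) \<in> SS"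
  by (intro subalg_gen.scal subalg_gen_diff subalg_gen.mult S_X S_Y)

lemma SG_all: "w \<in> SG"
proof -
  have "w \<in> subalg_gen {X, Y, Z}" by (rule gens)
  then show ?thesis
  proof (induction rule: subalg_gen.induct)
    case (gen s)
    then consider "s = X" | "s = Y" | "s = Z" by blast
    then show ?case
    proof cases
      case 1 then show ?thesis using SGset.base[OF S_X, where J=J and G=G and k=0] by simp
    next
      case 2 then show ?thesis using SGset.base[OF S_Y, where J=J and G=G and k=0] by simp
    next
      case 3
      have a: "(- sc e (sc q (X * Y) - sc q' (Y * X))) * G ^ 0 \<in> SG"
        using SGset.base[where s="- sc e (sc q (X * Y) - sc q' (Y * X))" and S=SS and J=J and G=G and k=0]
          subalg_gen_diff[OF subalg_gen_zero P_S] by simp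
      have b: "1 * G ^ 1 \<in> SG" by (intro SGset.base subalg_gen.one)
      have "Z = 1 * G ^ 1 + (- sc e (sc q (X * Y) - sc q' (Y * X))) * G ^ 0"
        using hZ by simp
      then show ?thesis using SGset.add[OF b a] 3 by simp
    qed
  next
    case one then show ?case using SGset.base[OF subalg_gen.one[of "{X,Y}"], where J=J and G=G and k=0] by simp
  next
    case (scal x c)
    have "sc c 1 * G ^ 0 \<in> SG" by (intro SGset.base S_sc1)
    then have h: "sc c 1 \<in> SG" by simp
    have "sc c 1 * x \<in> SG" by (rule SG_mult[OF h scal.IH])
    moreover have "sc c 1 * x = sc c x" by simp
    ultimately show ?case by simp
  next
    case (add x y) then show ?case by (blast intro: SGset.add)
  next
    case (mult x y) then show ?case by (blast intro: SG_mult)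
  qed
qed


lemma SW_addJ: "x \<in> SW \<Longrightarrow> y - x \<in> J \<Longrightarrow> y \<in> SW"
proof -
  assume a: "x \<in> SW" "y - x \<in> J"
  have "x + (y - x) \<in> SW" by (rule SWset.add[OF a(1) SWset.jj[OF a(2)]])
  then show ?thesis by simp
qed

lemma SW_T: "z \<in> SW \<Longrightarrow> z \<in> TT"
proof (induction rule: SWset.induct)
  case (jj j) then show ?case using subalg_gen_zero[of "{X,Y}"] by force
next
  case (gen s s')
  have "s * cc * s' \<in> SS"
    using gen by (intro subalg_gen.mult subalg_gen_diff S_X S_Y)
  then show ?case using J0 by force
next
  case (add x y)
  then obtain u j u' j' where "x = u + j" "u \<in> SS" "j \<in> J" "y = u' + j'" "u' \<in> SS" "j' \<in> J" by blast
  then have "x + y = (u + u') + (j + j')" "u + u' \<in> SS" "j + j' \<in> J"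
    by (auto simp: add_ac intro: subalg_gen.add Jadd)
  then show ?case by blast
qed

lemma SW_lS: "z \<in> SW \<Longrightarrow> s \<in> SS \<Longrightarrow> s * z \<in> SW"
proof (induction rule: SWset.induct)
  case (jj j) then show ?case using Jl SWset.jj by blast
next
  case (gen a b)
  have "(s * a) * cc * b \<in> SW" using gen by (intro SWset.gen subalg_gen.mult)
  then show ?case by (simp add: mult.assoc)
next
  case (add x y) then show ?case by (simp add: distrib_left SWset.add)
qed

lemma SW_rS: "z \<in> SW \<Longrightarrow> s \<in> SS \<Longrightarrow> z * s \<in> SW"
proof (induction rule: SWset.induct)
  case (jj j) then show ?case using Jr SWset.jj by blast
next
  case (gen a b)
  have "a * cc * (b * s) \<in> SW" using gen by (intro SWset.gen subalg_gen.mult)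
  then show ?case by (simp add: mult.assoc)
next
  case (add x y) then show ?case by (simp add: distrib_right SWset.add)
qed

lemma SW_sc: "z \<in> SW \<Longrightarrow> sc c z \<in> SW"
  using SW_lS[OF _ S_sc1, of z c] by simp

lemma SW_0: "0 \<in> SW" using SWset.jj[OF J0] .

lemma comm_gen: "y \<in> SS \<Longrightarrow> g \<in> {X, Y} \<Longrightarrow> g * y - y * g \<in> SW"
proof (induction rule: subalg_gen.induct)
  case (gen s)
  have c1: "cc \<in> SW" using SWset.gen[where s=1 and S=SS and s'=1 and J=J and c=cc] subalg_gen.one[of "{X,Y}"] by simp
  have c2: "Y * X - X * Y \<in> SW" using SW_sc[OF c1, of "-1"] by (simp add: sc_neg_scalar)
  from gen show ?case using c1 c2 SW_0 by auto
next
  case one then show ?case using SW_0 by simp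
next
  case (scal x c) then show ?case using SW_sc[of "g * x - x * g" c] by simp
next
  case (add x y)
  have "g * (x + y) - (x + y) * g = (g * x - x * g) + (g * y - y * g)" by (simp add: algebra_simps)
  then show ?case using add SWset.add by metis
next
  case (mult x y)
  have "g * (x * y) - (x * y) * g = (g * x - x * g) * y + x * (g * y - y * g)" by (simp add: algebra_simps)
  then show ?case using mult SWset.add SW_lS SW_rS by metis
qed

lemma comm_S: "x \<in> SS \<Longrightarrow> y \<in> SS \<Longrightarrow> x * y - y * x \<in> SW"
proof (induction rule: subalg_gen.induct)
  case (gen s) then show ?case using comm_gen by blast
next
  case one then show ?case using SW_0 by simp
next
  case (scal x c) then show ?case using SW_sc[of "x * y - y * x" c] by simp
next
  case (add x1 x2)
  have "(x1 + x2) * y - y * (x1 + x2) = (x1 * y - y * x1) + (x2 * y - y * x2)" by (simp add: algebra_simps)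
  then show ?case using add SWset.add by metis
next
  case (mult x1 x2)
  have "(x1 * x2) * y - y * (x1 * x2) = x1 * (x2 * y - y * x2) + (x1 * y - y * x1) * x2" by (simp add: algebra_simps)
  then show ?case using mult SWset.add SW_lS SW_rS by metis
qed


abbreviation "PP \<equiv> sc e (sc q (X * Y) - sc q' (Y * X))"
abbreviation "Xp \<equiv> sc q (Y * PP) - sc q' (PP * Y)"

lemma Xp_S: "Xp \<in> SS"
  by (intro subalg_gen_diff subalg_gen.scal subalg_gen.mult S_X S_Y P_S)

lemma key0: "sc (e * (q - q')) (G * (Y * X - X * Y)) - sc e (Xp * X - X * Xp) \<in> J"
proof -
  define D where "D = sc e (sc q ((Y * G - G * Y) * X) - sc q ((X * Y) * G - G * (X * Y)) + sc q' ((X * G - G * X) * Y))"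
  have a: "(Y * G - G * Y) * X \<in> J" using Jr[OF Jneg[OF cG[of Y]]] by simp
  have b: "(X * Y) * G - G * (X * Y) \<in> J" using Jneg[OF cG[of "X * Y"]] by simp
  have c: "(X * G - G * X) * Y \<in> J" using Jr[OF Jneg[OF cG[of X]]] by simp
  have DJ: "D \<in> J" unfolding D_def by (rule Jsc[OF Jadd[OF Jdiff[OF Jsc[OF a] Jsc[OF b]] Jsc[OF c]]])
  have eq: "Gx * X - X * Gx - D = sc (e * (q - q')) (G * (Y * X - X * Y)) - sc e (Xp * X - X * Xp)"
    unfolding D_def hGx hZ by (simp add: algebra_simps sc_add_scalar sc_diff_scalar)
  show ?thesis using Jdiff[OF cGx[of X] DJ] eq by simp
qed


lemma key: "G * cc - sc (- inverse (q - q')) (Xp * X - X * Xp) \<in> J"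
proof -
  let ?a = "- inverse (e * (q - q'))"
  have ab: "?a * (e * (q - q')) = -1" using e0 qq by (simp add: field_simps)
  have ac: "?a * e = - inverse (q - q')" using e0 qq by (simp add: field_simps)
  have "sc ?a (sc (e * (q - q')) (G * (Y * X - X * Y)) - sc e (Xp * X - X * Xp)) \<in> J"
    by (rule Jsc[OF key0])
  also have "sc ?a (sc (e * (q - q')) (G * (Y * X - X * Y)) - sc e (Xp * X - X * Xp))
      = sc (-1) (G * (Y * X - X * Y)) - sc (- inverse (q - q')) (Xp * X - X * Xp)"
    by (simp only: sc_diff sc_sc ab ac)
  also have "\<dots> = G * cc - sc (- inverse (q - q')) (Xp * X - X * Xp)"
    by (simp add: sc_neg_scalar algebra_simps)
  finally show ?thesis .
qed

lemma SW_G: "z \<in> SW \<Longrightarrow> G * z \<in> SW"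
proof (induction rule: SWset.induct)
  case (jj j) then show ?case using Jl SWset.jj by blast
next
  case (gen s s')
  let ?W = "sc (- inverse (q - q')) (Xp * X - X * Xp)"
  have W: "?W \<in> SW" by (intro SW_sc comm_S Xp_S S_X)
  have sWs: "s * ?W * s' \<in> SW" using SW_lS[OF SW_rS[OF W gen(2)] gen(1)] by (simp add: mult.assoc)
  have "G * (s * cc * s') - s * ?W * s' = (G * s - s * G) * cc * s' + s * (G * cc - ?W) * s'"
    by (simp add: algebra_simps)
  moreover have "(G * s - s * G) * cc * s' \<in> J" using Jr cG by blast
  moreover have "s * (G * cc - ?W) * s' \<in> J" using Jr Jl key by blast
  ultimately have "G * (s * cc * s') - s * ?W * s' \<in> J" using Jadd by metis
  then show ?case using SW_addJ[OF sWs] by simp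
next
  case (add x y) then show ?case by (simp add: distrib_left SWset.add)
qed

lemma SW_Gpow: "z \<in> SW \<Longrightarrow> G ^ k * z \<in> SW"
proof (induction k)
  case 0 then show ?case by simp
next
  case (Suc k) then show ?case using SW_G[of "G ^ k * z"] by (simp add: mult.assoc)
qed

lemma SW_lSG: "x \<in> SG \<Longrightarrow> z \<in> SW \<Longrightarrow> x * z \<in> SW"
proof (induction rule: SGset.induct)
  case (base s k) then show ?case using SW_lS[OF SW_Gpow] by (simp add: mult.assoc)
next
  case (jj j) then show ?case using Jr SWset.jj by blast
next
  case (add x y) then show ?case by (simp add: distrib_right SWset.add)
qed

lemma SW_rSG: "x \<in> SG \<Longrightarrow> z \<in> SW \<Longrightarrow> z * x \<in> SW"
proof (induction rule: SGset.induct)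
  case (base s k)
  have w: "z * s \<in> SW" using SW_rS base by blast
  have "z * (s * G ^ k) - G ^ k * (z * s) \<in> J"
    using Jneg[OF cGpow[of k "z * s"]] by (simp add: mult.assoc)
  then show ?case using SW_addJ[OF SW_Gpow[OF w]] by blast
next
  case (jj j) then show ?case using Jl SWset.jj by blast
next
  case (add x y) then show ?case by (simp add: distrib_left SWset.add)
qed

lemma SW_l: "z \<in> SW \<Longrightarrow> a * z \<in> SW" using SW_lSG SG_all by blast
lemma SW_r: "z \<in> SW \<Longrightarrow> z * a \<in> SW" using SW_rSG SG_all by blast

lemma comm_SG: "x \<in> SG \<Longrightarrow> y \<in> SG \<Longrightarrow> x * y - y * x \<in> SW"
proof (induction x rule: SGset.induct)
  case (base s k)
  from base(2) base(1) show ?case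
  proof (induction y rule: SGset.induct)
    case (base s' m)
    have c: "(s * s' - s' * s) * G ^ (k + m) \<in> SW" using SW_r comm_S base by blast
    have "s * G ^ k * (s' * G ^ m) - s' * G ^ m * (s * G ^ k) - (s * s' - s' * s) * G ^ (k + m)
      = s * (G ^ k * s' - s' * G ^ k) * G ^ m - s' * (G ^ m * s - s * G ^ m) * G ^ k"
      by (simp add: algebra_simps power_add[symmetric] add.commute)
    moreover have "s * (G ^ k * s' - s' * G ^ k) * G ^ m - s' * (G ^ m * s - s * G ^ m) * G ^ k \<in> J"
      using Jdiff Jl Jr cGpow by blast
    ultimately show ?case using SW_addJ[OF c] by simp
  next
    case (jj j)
    have "s * G ^ k * j - j * (s * G ^ k) \<in> J" using Jl Jr jj Jdiff by blast
    then show ?case using SWset.jj by blast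
  next
    case (add y1 y2)
    have "s * G ^ k * (y1 + y2) - (y1 + y2) * (s * G ^ k)
       = (s * G ^ k * y1 - y1 * (s * G ^ k)) + (s * G ^ k * y2 - y2 * (s * G ^ k))"
      by (simp add: algebra_simps)
    then show ?case using add SWset.add by metis
  qed
next
  case (jj j)
  have "j * y - y * j \<in> J" using Jl Jr jj Jdiff by blast
  then show ?case using SWset.jj by blast
next
  case (add x1 x2)
  have "(x1 + x2) * y - y * (x1 + x2) = (x1 * y - y * x1) + (x2 * y - y * x2)" by (simp add: algebra_simps)
  then show ?case using add SWset.add by metis
qed

lemma comm_all: "a * (x * y - y * x) * b \<in> TT"
  using SW_T SW_l SW_r comm_SG SG_all by blast

lemma J_TT: "j \<in> J \<Longrightarrow> j \<in> TT"
  using subalg_gen_zero[of "{X,Y}"] by force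

end



lemma single_word_in: "Poly_Mapping.single (FW l) c \<in> subalg_gen {gA, gB, gC :: 'k::field free_alg}"
proof (induction l arbitrary: c)
  case Nil
  have "Poly_Mapping.single (FW []) c = sc c (1 :: 'k free_alg)"
    by (simp add: sc_def zero_fword_def[symmetric])
  then show ?case by (simp add: subalg_gen.scal subalg_gen.one)
next
  case (Cons g l)
  have "Poly_Mapping.single (FW (g # l)) c = Poly_Mapping.single (FW [g]) 1 * (Poly_Mapping.single (FW l) c :: 'k free_alg)"
    by (simp add: mult_single)
  moreover have "Poly_Mapping.single (FW [g]) 1 \<in> subalg_gen {gA, gB, gC :: 'k free_alg}"
    by (cases g) (auto simp: gA_def gB_def gC_def intro: subalg_gen.gen)
  ultimately show ?case using Cons by (simp add: subalg_gen.mult)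
qed

lemma subalg_gen_sum: "finite A \<Longrightarrow> (\<And>i. i \<in> A \<Longrightarrow> f i \<in> subalg_gen S) \<Longrightarrow> (\<Sum>i\<in>A. f i) \<in> subalg_gen S"
  by (induction A rule: finite_induct) (auto intro: subalg_gen.add subalg_gen_zero)

lemma all_in_gen: "(x :: 'k::field free_alg) \<in> subalg_gen {gA, gB, gC}"
proof -
  have "x = (\<Sum>w\<in>Poly_Mapping.keys x. Poly_Mapping.single w (Poly_Mapping.lookup x w))" by (rule poly_expand)
  also have "\<dots> \<in> subalg_gen {gA, gB, gC}"
  proof (rule subalg_gen_sum)
    fix w show "Poly_Mapping.single w (Poly_Mapping.lookup x w) \<in> subalg_gen {gA, gB, gC}"
      by (cases w) (simp add: single_word_in)
  qed simp
  finally show ?thesis .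
qed

lemma AW_props:
  "0 \<in> AW_ideal q" "x \<in> AW_ideal q \<Longrightarrow> y \<in> AW_ideal q \<Longrightarrow> x + y \<in> AW_ideal q"
  "x \<in> AW_ideal q \<Longrightarrow> a * x \<in> AW_ideal q" "x \<in> AW_ideal q \<Longrightarrow> x * a \<in> AW_ideal q"
  unfolding AW_ideal_def by (auto intro: ideal_gen.intros ideal_gen_lmult ideal_gen_rmult)

lemma AW_comm: "z \<in> {awA q, awB q, awC q} \<Longrightarrow> z * w - w * z \<in> AW_ideal q"
  unfolding AW_ideal_def by (rule ideal_gen_mem) blast

lemma AW_sub_I: "x \<in> AW_ideal q \<Longrightarrow> x \<in> comm_ideal_lift q"
  unfolding comm_ideal_lift_def by (rule ideal_gen_mem) blast

lemma gen_lift_eq: "gen_lift q S = {u + j | u j. u \<in> subalg_gen S \<and> j \<in> AW_ideal q}"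
  by (simp add: gen_lift_def)

lemma I_sub_gen_lift:
  fixes q :: "'k::field"
  assumes q0: "q \<noteq> 0" and q4: "q ^ 4 \<noteq> 1"
    and hZ: "Z = G - sc (inverse (q^2 - inverse q ^ 2)) (sc q (X * Y) - sc (inverse q) (Y * X))"
    and hGx: "Gx = X + sc (inverse (q^2 - inverse q ^ 2)) (sc q (Y * Z) - sc (inverse q) (Z * Y))"
    and G: "G \<in> {awA q, awB q, awC q}" and Gx: "Gx \<in> {awA q, awB q, awC q}"
    and gens: "{X, Y, Z} = {gA, gB, gC}"
  shows "comm_ideal_lift q \<subseteq> gen_lift q {X, Y}"
proof
  have e0: "inverse (q^2 - inverse q ^ 2) \<noteq> 0"
  proof
    assume "inverse (q^2 - inverse q ^ 2) = 0"
    then have "q^2 = inverse q ^ 2" by simp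
    then have "q^2 * q^2 = 1" using q0 by (simp add: field_simps)
    moreover have "q ^ 4 = q^2 * q^2" by (simp add: power2_eq_square power4_eq_xxxx mult.assoc)
    ultimately show False using q4 by metis
  qed
  have qq: "q \<noteq> inverse q"
  proof
    assume "q = inverse q"
    then have "q * q = 1" using q0 by (simp add: field_simps)
    then have "(q * q) ^ 2 = 1" by simp
    moreover have "(q * q) ^ 2 = q ^ 4" by (simp add: power2_eq_square power4_eq_xxxx mult.assoc)
    ultimately show False using q4 by metis
  qed
  have gg: "\<And>w. w \<in> subalg_gen {X, Y, Z}" using all_in_gen gens by metis
  fix x assume "x \<in> comm_ideal_lift q"
  then show "x \<in> gen_lift q {X, Y}"
    unfolding comm_ideal_lift_def
  proof (induction rule: ideal_gen.induct)
    case zero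
    then show ?case unfolding gen_lift_eq using subalg_gen_zero AW_props(1) by force
  next
    case (gen s a b)
    then show ?case
    proof
      assume "s \<in> {x * y - y * x |x y. True}"
      then obtain x y where s: "s = x * y - y * x" by blast
      show ?thesis unfolding gen_lift_eq s
        by (rule comm_all[OF AW_props(1) AW_props(2) AW_props(3) AW_props(4) hZ hGx AW_comm[OF G] AW_comm[OF Gx] e0 qq gg])
    next
      assume "s \<in> AW_ideal q"
      then have "a * s * b \<in> AW_ideal q" using AW_props by blast
      then show ?thesis unfolding gen_lift_eq using subalg_gen_zero by force
    qed
  next
    case (add x y)
    then obtain u j u' j' where "x = u + j" "u \<in> subalg_gen {X,Y}" "j \<in> AW_ideal q"
      "y = u' + j'" "u' \<in> subalg_gen {X,Y}" "j' \<in> AW_ideal q" unfolding gen_lift_eq by blast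
    then have "x + y = (u + u') + (j + j')" "u + u' \<in> subalg_gen {X,Y}" "j + j' \<in> AW_ideal q"
      by (auto simp: add_ac intro: subalg_gen.add AW_props)
    then show ?case unfolding gen_lift_eq by blast
  qed
qed




type_synonym 'k cpoly = "(nat \<times> nat \<times> nat) \<Rightarrow>\<^sub>0 'k"

definition cnt :: "fword \<Rightarrow> nat \<times> nat \<times> nat" where
  "cnt w = (case w of FW l \<Rightarrow> (length (filter ((=) GA) l), length (filter ((=) GB) l), length (filter ((=) GC) l)))"

lemma cnt_add: "cnt (a + b) = cnt a + cnt b"
  by (cases a; cases b) (simp add: cnt_def)

lemma cnt_zero: "cnt 0 = 0"
  by (simp add: cnt_def zero_fword_def zero_prod_def)

definition phi :: "'k::field free_alg \<Rightarrow> 'k cpoly" where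
  "phi x = (\<Sum>w\<in>Poly_Mapping.keys x. Poly_Mapping.single (cnt w) (Poly_Mapping.lookup x w))"

lemma phi_superset: "finite K \<Longrightarrow> Poly_Mapping.keys x \<subseteq> K \<Longrightarrow>
  phi x = (\<Sum>w\<in>K. Poly_Mapping.single (cnt w) (Poly_Mapping.lookup x w))"
  unfolding phi_def by (rule sum.mono_neutral_left) (auto simp: in_keys_iff)

lemma phi_add: "phi (x + y) = phi x + phi y"
proof -
  let ?K = "Poly_Mapping.keys x \<union> Poly_Mapping.keys y \<union> Poly_Mapping.keys (x + y)"
  have f: "finite ?K" by simp
  show ?thesis
    by (subst (1 2 3) phi_superset[OF f]) (auto simp: lookup_add single_add sum.distrib)
qed

lemma phi_zero: "phi 0 = 0" by (simp add: phi_def)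

lemma phi_sum: "finite A \<Longrightarrow> phi (\<Sum>i\<in>A. f i) = (\<Sum>i\<in>A. phi (f i))"
  by (induction A rule: finite_induct) (simp_all add: phi_zero phi_add)

lemma phi_single: "phi (Poly_Mapping.single w c) = Poly_Mapping.single (cnt w) c"
  by (subst phi_superset[of "{w}"]) (auto simp: lookup_single)

lemma phi_neg: "phi (- x) = - phi x"
proof -
  have "phi x + phi (- x) = 0" using phi_add[of x "-x"] by (simp add: phi_zero)
  then show ?thesis by (metis minus_unique)
qed

lemma phi_diff: "phi (x - y) = phi x - phi y"
  using phi_add[of x "-y"] by (simp add: phi_neg)

lemma phi_mult: "phi (x * y) = phi x * phi y"
proof -
  have "x * y = (\<Sum>w\<in>Poly_Mapping.keys x. \<Sum>v\<in>Poly_Mapping.keys y.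
      Poly_Mapping.single w (Poly_Mapping.lookup x w) * Poly_Mapping.single v (Poly_Mapping.lookup y v))"
    apply (subst (1) poly_expand, subst (1) poly_expand[of y])
    apply (simp add: sum_distrib_left sum_distrib_right)
    by (rule sum.swap)
  then have "phi (x * y) = (\<Sum>w\<in>Poly_Mapping.keys x. \<Sum>v\<in>Poly_Mapping.keys y.
      Poly_Mapping.single (cnt w) (Poly_Mapping.lookup x w) * Poly_Mapping.single (cnt v) (Poly_Mapping.lookup y v))"
    by (simp add: phi_sum mult_single phi_single cnt_add)
  also have "\<dots> = phi x * phi y"
    apply (simp add: phi_def sum_distrib_left sum_distrib_right)
    by (rule sum.swap)
  finally show ?thesis .
qed

lemma phi_one: "phi 1 = 1"
proof -
  have "(1 :: 'a::field free_alg) = Poly_Mapping.single 0 1" by simp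
  then show ?thesis by (metis phi_single cnt_zero single_one)
qed

lemma phi_pow: "phi (x ^ n) = phi x ^ n"
  by (induction n) (simp_all add: phi_one phi_mult)

lemma phi_sc: "phi (sc c x) = Poly_Mapping.single 0 c * phi x"
  unfolding sc_def by (simp add: phi_mult phi_single cnt_zero)

lemma phi_gA: "phi gA = Poly_Mapping.single (1,0,0) 1"
  by (simp add: gA_def phi_single cnt_def)
lemma phi_gB: "phi gB = Poly_Mapping.single (0,1,0) 1"
  by (simp add: gB_def phi_single cnt_def)
lemma phi_gC: "phi gC = Poly_Mapping.single (0,0,1) 1"
  by (simp add: gC_def phi_single cnt_def)

lemma single000[simp]: "Poly_Mapping.single ((0,0,0) :: nat \<times> nat \<times> nat) (1::'k::field) = 1"
proof -
  have "(0,0,0) = (0 :: nat \<times> nat \<times> nat)" by (simp add: zero_prod_def)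
  then show ?thesis by (simp only:) (rule single_one)
qed

lemma single_powA: "(Poly_Mapping.single ((1,0,0) :: nat \<times> nat \<times> nat) (1::'k::field)) ^ n = Poly_Mapping.single (n,0,0) 1"
  by (induction n) (simp_all add: mult_single zero_prod_def)
lemma single_powB: "(Poly_Mapping.single ((0,1,0) :: nat \<times> nat \<times> nat) (1::'k::field)) ^ n = Poly_Mapping.single (0,n,0) 1"
  by (induction n) (simp_all add: mult_single zero_prod_def)
lemma single_powC: "(Poly_Mapping.single ((0,0,1) :: nat \<times> nat \<times> nat) (1::'k::field)) ^ n = Poly_Mapping.single (0,0,n) 1"
  by (induction n) (simp_all add: mult_single zero_prod_def)

definition mono3 :: "nat \<times> nat \<times> nat \<Rightarrow> 'k::field free_alg" where
  "mono3 = (\<lambda>(i, j, k). gA ^ i * gB ^ j * gC ^ k)"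

lemma phi_mono3: "phi (mono3 t) = Poly_Mapping.single t 1"
proof (cases t)
  case (fields a b c)
  have "phi (mono3 t) = phi gA ^ a * phi gB ^ b * phi gC ^ c"
    unfolding fields mono3_def by (simp add: phi_mult phi_pow)
  also have "\<dots> = Poly_Mapping.single (a,0,0) 1 * Poly_Mapping.single (0,b,0) 1 * Poly_Mapping.single (0,0,c) 1"
    by (simp only: phi_gA phi_gB phi_gC single_powA single_powB single_powC)
  also have "\<dots> = Poly_Mapping.single t 1" unfolding fields by (simp add: mult_single)
  finally show ?thesis .
qed

lemma phi_kills: "x \<in> ideal_gen R \<Longrightarrow> (\<And>s. s \<in> R \<Longrightarrow> phi s = 0) \<Longrightarrow> phi x = 0"
proof (induction rule: ideal_gen.induct)
  case zero then show ?case by (simp add: phi_zero)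
next
  case (gen s a b) then show ?case by (simp add: phi_mult)
next
  case (add x y) then show ?case by (simp add: phi_add)
qed

lemma phi_comm: "phi (x * y - y * x) = 0"
  by (simp add: phi_diff phi_mult mult.commute)

lemma phi_AW: "x \<in> AW_ideal q \<Longrightarrow> phi x = 0"
  unfolding AW_ideal_def by (erule phi_kills) (auto simp: phi_comm)

lemma phi_I: "x \<in> comm_ideal_lift q \<Longrightarrow> phi x = 0"
  unfolding comm_ideal_lift_def by (erule phi_kills) (auto simp: phi_comm phi_AW)




lemma Icl_comm: "x * y - y * x \<in> comm_ideal_lift q"
  unfolding comm_ideal_lift_def by (rule ideal_gen_mem) blast

lemma Icl_props:
  "0 \<in> comm_ideal_lift q" "x \<in> comm_ideal_lift q \<Longrightarrow> y \<in> comm_ideal_lift q \<Longrightarrow> x + y \<in> comm_ideal_lift q"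
  "x \<in> comm_ideal_lift q \<Longrightarrow> a * x \<in> comm_ideal_lift q" "x \<in> comm_ideal_lift q \<Longrightarrow> x * a \<in> comm_ideal_lift q"
  unfolding comm_ideal_lift_def by (auto intro: ideal_gen.intros ideal_gen_lmult ideal_gen_rmult)

lemma Icl_sc: "x \<in> comm_ideal_lift q \<Longrightarrow> sc c x \<in> comm_ideal_lift q"
  unfolding sc_def by (rule Icl_props(3))

lemma Icl_sum: "finite A \<Longrightarrow> (\<And>i. i \<in> A \<Longrightarrow> f i \<in> comm_ideal_lift q) \<Longrightarrow> (\<Sum>i\<in>A. f i) \<in> comm_ideal_lift q"
  by (induction A rule: finite_induct) (auto intro: Icl_props)

lemma word_red: "Poly_Mapping.single (FW l) 1 - mono3 (cnt (FW l)) \<in> comm_ideal_lift (q :: 'k::field)"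
proof (induction l)
  case Nil
  have "Poly_Mapping.single (FW []) (1::'k) = 1" by (simp add: zero_fword_def[symmetric])
  moreover have "mono3 (cnt (FW [])) = (1 :: 'k free_alg)" by (simp add: mono3_def cnt_def)
  ultimately show ?case using Icl_props(1) by simp
next
  case (Cons g l)
  obtain i j k where c: "cnt (FW l) = (i, j, k)" by (cases "cnt (FW l)") auto
  let ?g = "Poly_Mapping.single (FW [g]) (1::'k)"
  have sp: "Poly_Mapping.single (FW (g # l)) 1 = ?g * Poly_Mapping.single (FW l) 1"
    by (simp add: mult_single)
  have "?g * mono3 (i, j, k) - mono3 (cnt (FW (g # l))) \<in> comm_ideal_lift q"
  proof (cases g)
    case GA
    then have "?g * mono3 (i, j, k) - mono3 (cnt (FW (g # l))) = 0"
      using c by (simp add: mono3_def cnt_def gA_def[symmetric] mult.assoc)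
    then show ?thesis using Icl_props(1) by simp
  next
    case GB
    then have "?g * mono3 (i, j, k) - mono3 (cnt (FW (g # l))) = (gB * gA ^ i - gA ^ i * gB) * (gB ^ j * gC ^ k)"
      using c by (simp add: mono3_def cnt_def gB_def[symmetric] algebra_simps)
    then show ?thesis using Icl_props(4)[OF Icl_comm] by simp
  next
    case GC
    then have "?g * mono3 (i, j, k) - mono3 (cnt (FW (g # l))) = (gC * (gA ^ i * gB ^ j) - (gA ^ i * gB ^ j) * gC) * gC ^ k"
      using c by (simp add: mono3_def cnt_def gC_def[symmetric] algebra_simps)
    then show ?thesis using Icl_props(4)[OF Icl_comm] by simp
  qed
  moreover have "?g * (Poly_Mapping.single (FW l) 1 - mono3 (i, j, k)) \<in> comm_ideal_lift q"
    using Cons c by (simp add: Icl_props(3))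
  ultimately have "?g * (Poly_Mapping.single (FW l) 1 - mono3 (i, j, k)) + (?g * mono3 (i, j, k) - mono3 (cnt (FW (g # l)))) \<in> comm_ideal_lift q"
    by (rule Icl_props(2)[rotated])
  then show ?case by (simp add: sp algebra_simps)
qed

lemma single_sc: "Poly_Mapping.single w c = sc c (Poly_Mapping.single w (1 :: 'k::field))"
  by (simp add: sc_def mult_single)

definition Psi :: "'k::field cpoly \<Rightarrow> 'k free_alg" where
  "Psi p = lin_comb mono3 (Poly_Mapping.keys p) (Poly_Mapping.lookup p)"

lemma Psi_superset: "finite K \<Longrightarrow> Poly_Mapping.keys p \<subseteq> K \<Longrightarrow>
  Psi p = (\<Sum>t\<in>K. sc (Poly_Mapping.lookup p t) (mono3 t))"
  unfolding Psi_def lin_comb_def by (rule sum.mono_neutral_left) (auto simp: in_keys_iff)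

lemma Psi_add: "Psi (p + p') = Psi p + Psi p'"
proof -
  let ?K = "Poly_Mapping.keys p \<union> Poly_Mapping.keys p' \<union> Poly_Mapping.keys (p + p')"
  have f: "finite ?K" by simp
  show ?thesis
    by (subst (1 2 3) Psi_superset[OF f]) (auto simp: lookup_add sc_add_scalar sum.distrib)
qed

lemma Psi_zero: "Psi 0 = 0" by (simp add: Psi_def lin_comb_def)

lemma Psi_sum: "finite A \<Longrightarrow> Psi (\<Sum>i\<in>A. f i) = (\<Sum>i\<in>A. Psi (f i))"
  by (induction A rule: finite_induct) (simp_all add: Psi_zero Psi_add)

lemma Psi_single: "Psi (Poly_Mapping.single t c) = sc c (mono3 t)"
  by (subst Psi_superset[of "{t}"]) (auto simp: lookup_single)

lemma span_all: "x - Psi (phi x) \<in> comm_ideal_lift q"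
proof -
  let ?K = "Poly_Mapping.keys x"
  have "Psi (phi x) = (\<Sum>w\<in>?K. sc (Poly_Mapping.lookup x w) (mono3 (cnt w)))"
    unfolding phi_def by (simp add: Psi_sum Psi_single)
  moreover have "x = (\<Sum>w\<in>?K. sc (Poly_Mapping.lookup x w) (Poly_Mapping.single w 1))"
    by (subst poly_expand) (simp add: single_sc[symmetric])
  ultimately have "x - Psi (phi x) = (\<Sum>w\<in>?K. sc (Poly_Mapping.lookup x w) (Poly_Mapping.single w 1 - mono3 (cnt w)))"
    by (simp add: sum_subtractf)
  also have "\<dots> \<in> comm_ideal_lift q"
  proof (rule Icl_sum)
    fix w show "sc (Poly_Mapping.lookup x w) (Poly_Mapping.single w 1 - mono3 (cnt w)) \<in> comm_ideal_lift q"
      by (cases w) (simp only: Icl_sc word_red)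
  qed simp
  finally show ?thesis .
qed


lemma phi_lin_comb: "finite F \<Longrightarrow> phi (lin_comb (mono3 \<circ> emb) F c) = (\<Sum>i\<in>F. Poly_Mapping.single (emb i) (c i))"
  unfolding lin_comb_def by (simp add: phi_sum phi_sc phi_mono3 mult_single)

lemma complement_gen:
  fixes emb :: "'i \<Rightarrow> nat \<times> nat \<times> nat" and q :: "'k::field"
  assumes inj: "inj emb" and keysU: "\<And>u. u \<in> U \<Longrightarrow> Poly_Mapping.keys (phi u) \<subseteq> range emb"
    and mem: "\<And>i. mono3 (emb i) \<in> U"
  shows "complement_basis (comm_ideal_lift q) U UNIV (mono3 \<circ> emb)"
  unfolding complement_basis_def
proof (intro conjI ballI allI impI)
  fix t show "(mono3 \<circ> emb) t \<in> U" using mem by simp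
next
  fix u assume u: "u \<in> U"
  let ?K = "Poly_Mapping.keys (phi u)"
  let ?F = "emb -` ?K"
  let ?c = "\<lambda>i. Poly_Mapping.lookup (phi u) (emb i)"
  have fin: "finite ?F" by (rule finite_vimageI) (simp_all add: inj)
  have img: "emb ` ?F = ?K" using keysU[OF u] by auto
  have "lin_comb (mono3 \<circ> emb) ?F ?c = (\<Sum>i\<in>?F. sc (Poly_Mapping.lookup (phi u) (emb i)) (mono3 (emb i)))"
    by (simp add: lin_comb_def)
  also have "\<dots> = (\<Sum>t\<in>emb ` ?F. sc (Poly_Mapping.lookup (phi u) t) (mono3 t))"
    by (rule sum.reindex[symmetric, unfolded comp_def]) (meson inj inj_on_subset subset_UNIV)
  also have "\<dots> = Psi (phi u)" unfolding img by (simp add: Psi_def lin_comb_def)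
  finally have eq: "lin_comb (mono3 \<circ> emb) ?F ?c = Psi (phi u)" .
  have "u = lin_comb (mono3 \<circ> emb) ?F ?c + (u - Psi (phi u))" by (simp add: eq)
  moreover have "u - Psi (phi u) \<in> comm_ideal_lift q" by (rule span_all)
  ultimately show "\<exists>F c y. finite F \<and> F \<subseteq> UNIV \<and> y \<in> comm_ideal_lift q \<and> u = lin_comb (mono3 \<circ> emb) F c + y"
    using fin by blast
next
  fix F c t
  assume a: "finite F \<and> F \<subseteq> UNIV \<and> lin_comb (mono3 \<circ> emb) F c \<in> comm_ideal_lift q" and t: "t \<in> F"
  then have "phi (lin_comb (mono3 \<circ> emb) F c) = 0" using phi_I by blast
  then have "(\<Sum>i\<in>F. Poly_Mapping.single (emb i) (c i)) = 0" using a phi_lin_comb by metis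
  then have "Poly_Mapping.lookup (\<Sum>i\<in>F. Poly_Mapping.single (emb i) (c i)) (emb t) = 0" by simp
  then have "(\<Sum>i\<in>F. if i = t then c i else 0) = 0"
    by (simp add: Poly_Mapping.lookup_sum lookup_single when_def inj_eq[OF inj])
  then show "c t = 0" using a t by simp
qed

lemma keys_single0_mult: "Poly_Mapping.keys (Poly_Mapping.single (0::'a::monoid_add) c * (p :: 'a \<Rightarrow>\<^sub>0 'b::semiring_0)) \<subseteq> Poly_Mapping.keys p"
  using keys_mult[of "Poly_Mapping.single 0 c" p] by (auto split: if_splits)

lemma keys_phi_subalg:
  assumes gen: "\<And>s. s \<in> S \<Longrightarrow> Poly_Mapping.keys (phi s) \<subseteq> K"
    and K0: "0 \<in> K" and Kadd: "\<And>a b. a \<in> K \<Longrightarrow> b \<in> K \<Longrightarrow> a + b \<in> K"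
  shows "x \<in> subalg_gen S \<Longrightarrow> Poly_Mapping.keys (phi x) \<subseteq> K"
proof (induction rule: subalg_gen.induct)
  case (gen s) then show ?case by (rule assms(1))
next
  case one then show ?case using K0 by (simp add: phi_one)
next
  case (scal x c)
  show ?case unfolding phi_sc using keys_single0_mult scal by blast
next
  case (add x y) then show ?case using keys_add[of "phi x" "phi y"] by (auto simp: phi_add)
next
  case (mult x y)
  have "Poly_Mapping.keys (phi (x * y)) \<subseteq> {a + b |a b. a \<in> Poly_Mapping.keys (phi x) \<and> b \<in> Poly_Mapping.keys (phi y)}"
    unfolding phi_mult by (rule keys_mult)
  also have "\<dots> \<subseteq> K" using mult Kadd by blast
  finally show ?case .
qed

lemma keys_phi_gen_lift:
  assumes "\<And>s. s \<in> S \<Longrightarrow> Poly_Mapping.keys (phi s) \<subseteq> K"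
    and "0 \<in> K" and "\<And>a b. a \<in> K \<Longrightarrow> b \<in> K \<Longrightarrow> a + b \<in> K"
    and u: "u \<in> gen_lift q S"
  shows "Poly_Mapping.keys (phi u) \<subseteq> K"
proof -
  obtain s j where "u = s + j" "s \<in> subalg_gen S" "j \<in> AW_ideal q" using u unfolding gen_lift_eq by blast
  then show ?thesis using keys_phi_subalg[OF assms(1-3)] phi_AW[of j q] by (simp add: phi_add)
qed

lemma is_subalg_gen_lift: "is_subalg (gen_lift q S)"
  unfolding is_subalg_def gen_lift_eq
proof (intro conjI ballI allI)
  show "1 \<in> {u + j |u j. u \<in> subalg_gen S \<and> j \<in> AW_ideal q}"
    using subalg_gen.one AW_props(1) by force
next
  fix x y assume "x \<in> {u + j |u j. u \<in> subalg_gen S \<and> j \<in> AW_ideal q}" "y \<in> {u + j |u j. u \<in> subalg_gen S \<and> j \<in> AW_ideal q}"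
  then obtain u j u' j' where h: "x = u + j" "u \<in> subalg_gen S" "j \<in> AW_ideal q"
      "y = u' + j'" "u' \<in> subalg_gen S" "j' \<in> AW_ideal q" by blast
  have "x + y = (u + u') + (j + j')" "u + u' \<in> subalg_gen S" "j + j' \<in> AW_ideal q"
    using h by (auto simp: add_ac intro: subalg_gen.add AW_props)
  then show "x + y \<in> {u + j |u j. u \<in> subalg_gen S \<and> j \<in> AW_ideal q}" by blast
  have "x * y = u * u' + (u * j' + j * u' + j * j')" "u * u' \<in> subalg_gen S" "u * j' + j * u' + j * j' \<in> AW_ideal q"
    using h by (auto simp: algebra_simps intro: subalg_gen.mult AW_props)
  then show "x * y \<in> {u + j |u j. u \<in> subalg_gen S \<and> j \<in> AW_ideal q}" by blast
next
  fix c x assume "x \<in> {u + j |u j. u \<in> subalg_gen S \<and> j \<in> AW_ideal q}"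
  then obtain u j where h: "x = u + j" "u \<in> subalg_gen S" "j \<in> AW_ideal q" by blast
  have "sc c x = sc c u + sc c j" using h by simp
  moreover have "sc c u \<in> subalg_gen S" using h by (intro subalg_gen.scal)
  moreover have "sc c j \<in> AW_ideal q" unfolding sc_def using h by (intro AW_props(3))
  ultimately show "sc c x \<in> {u + j |u j. u \<in> subalg_gen S \<and> j \<in> AW_ideal q}" by blast
qed

lemma is_subalg_Int: "is_subalg U \<Longrightarrow> is_subalg V \<Longrightarrow> is_subalg (U \<inter> V)"
  unfolding is_subalg_def by blast

lemma is_subalg_UNIV: "is_subalg UNIV" unfolding is_subalg_def by blast


lemma in_gen_lift: "u \<in> subalg_gen S \<Longrightarrow> u \<in> gen_lift q S"
  unfolding gen_lift_eq using AW_props(1) by force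

lemma in_rangeI': "x = f y \<Longrightarrow> x \<in> range f" by auto

lemma kAB: "u \<in> gen_lift q {gA, gB} \<Longrightarrow> Poly_Mapping.keys (phi u) \<subseteq> {t. snd (snd t) = 0}"
  by (rule keys_phi_gen_lift) (auto simp: phi_gA phi_gB zero_prod_def)
lemma kBC: "u \<in> gen_lift q {gB, gC} \<Longrightarrow> Poly_Mapping.keys (phi u) \<subseteq> {t. fst t = 0}"
  by (rule keys_phi_gen_lift) (auto simp: phi_gB phi_gC zero_prod_def)
lemma kAC: "u \<in> gen_lift q {gA, gC} \<Longrightarrow> Poly_Mapping.keys (phi u) \<subseteq> {t. fst (snd t) = 0}"
  by (rule keys_phi_gen_lift) (auto simp: phi_gA phi_gC zero_prod_def)

lemma gA_in: "gA ^ i \<in> subalg_gen {gA, X}" by (intro subalg_gen_pow subalg_gen.gen) simp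
lemma gB_in1: "gB ^ i \<in> subalg_gen {gA, gB}" by (intro subalg_gen_pow subalg_gen.gen) simp
lemma gB_in2: "gB ^ i \<in> subalg_gen {gB, gC}" by (intro subalg_gen_pow subalg_gen.gen) simp
lemma gC_in1: "gC ^ i \<in> subalg_gen {gB, gC}" by (intro subalg_gen_pow subalg_gen.gen) simp
lemma gC_in2: "gC ^ i \<in> subalg_gen {gA, gC}" by (intro subalg_gen_pow subalg_gen.gen) simp

lemma rAB: "{t. snd (snd t) = (0::nat)} \<subseteq> range (\<lambda>(i, j). (i, j, 0::nat))" by (auto simp: image_iff)
lemma rBC: "{t. fst t = (0::nat)} \<subseteq> range (\<lambda>(j, k). (0::nat, j, k::nat))" by (auto simp: image_iff)
lemma rAC: "{t. fst (snd t) = (0::nat)} \<subseteq> range (\<lambda>(i, k). (i, 0::nat, k::nat))" by (auto simp: image_iff)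
lemma rA: "{t. snd (snd t) = (0::nat)} \<inter> {t. fst (snd t) = 0} \<subseteq> range (\<lambda>i. (i, 0::nat, 0::nat))" by auto
lemma rB: "{t. snd (snd t) = (0::nat)} \<inter> {t. fst t = (0::nat)} \<subseteq> range (\<lambda>j. (0::nat, j, 0::nat))" by auto
lemma rC: "{t. fst (snd t) = (0::nat)} \<inter> {t. fst t = (0::nat)} \<subseteq> range (\<lambda>k. (0::nat, 0::nat, k))" by auto
lemma r1: "{t. snd (snd t) = (0::nat)} \<inter> {t. fst t = (0::nat)} \<inter> {t. fst (snd t) = (0::nat)} \<subseteq> range (\<lambda>_::unit. (0::nat, 0::nat, 0::nat))" by auto

theorem proposition11p16:
  fixes q :: "'k::field"
  assumes "q \<noteq> 0" and "q ^ 4 \<noteq> 1"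
  defines "I \<equiv> comm_ideal_lift q"
      and "AB \<equiv> gen_lift q {gA, gB}"
      and "BC \<equiv> gen_lift q {gB, gC}"
      and "AC \<equiv> gen_lift q {gA, gC}"
  shows "(is_subalg (UNIV :: 'k free_alg set) \<and> I \<subseteq> UNIV \<and> complement_basis I UNIV (UNIV :: (nat \<times> nat \<times> nat) set) (\<lambda>(i, j, k). gA ^ i * gB ^ j * gC ^ k)) \<and>
    (is_subalg AB \<and> I \<subseteq> AB \<and> complement_basis I AB (UNIV :: (nat \<times> nat) set) (\<lambda>(i, j). gA ^ i * gB ^ j)) \<and>
    (is_subalg BC \<and> I \<subseteq> BC \<and> complement_basis I BC (UNIV :: (nat \<times> nat) set) (\<lambda>(j, k). gB ^ j * gC ^ k)) \<and>
    (is_subalg AC \<and> I \<subseteq> AC \<and> complement_basis I AC (UNIV :: (nat \<times> nat) set) (\<lambda>(i, k). gA ^ i * gC ^ k)) \<and>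
    (is_subalg (AB \<inter> AC) \<and> I \<subseteq> AB \<inter> AC \<and> complement_basis I (AB \<inter> AC) (UNIV :: nat set) (\<lambda>i. gA ^ i)) \<and>
    (is_subalg (AB \<inter> BC) \<and> I \<subseteq> AB \<inter> BC \<and> complement_basis I (AB \<inter> BC) (UNIV :: nat set) (\<lambda>j. gB ^ j)) \<and>
    (is_subalg (AC \<inter> BC) \<and> I \<subseteq> AC \<inter> BC \<and> complement_basis I (AC \<inter> BC) (UNIV :: nat set) (\<lambda>k. gC ^ k)) \<and>
    (is_subalg (AB \<inter> BC \<inter> AC) \<and> I \<subseteq> AB \<inter> BC \<inter> AC \<and> complement_basis I (AB \<inter> BC \<inter> AC) (UNIV :: unit set) (\<lambda>_. 1))"
proof -
  have IAB: "I \<subseteq> AB" unfolding I_def AB_def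
    by (rule I_sub_gen_lift[where Z=gC and G="awC q" and Gx="awA q"]) (simp_all add: assms awC_def awA_def)
  have IBC: "I \<subseteq> BC" unfolding I_def BC_def
    by (rule I_sub_gen_lift[where Z=gA and G="awA q" and Gx="awB q"]) (auto simp: assms awA_def awB_def)
  have "{gA, gC} = {gC, gA :: 'k free_alg}" by auto
  then have IAC: "I \<subseteq> AC" unfolding I_def AC_def
    by (simp only:) (rule I_sub_gen_lift[where Z=gB and G="awB q" and Gx="awC q"], auto simp: assms awB_def awC_def)
  have sAB: "is_subalg AB" "is_subalg BC" "is_subalg AC"
    unfolding AB_def BC_def AC_def by (rule is_subalg_gen_lift)+
  have kAB': "\<And>u. u \<in> AB \<Longrightarrow> Poly_Mapping.keys (phi u) \<subseteq> {t. snd (snd t) = 0}" unfolding AB_def by (rule kAB)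
  have kBC': "\<And>u. u \<in> BC \<Longrightarrow> Poly_Mapping.keys (phi u) \<subseteq> {t. fst t = 0}" unfolding BC_def by (rule kBC)
  have kAC': "\<And>u. u \<in> AC \<Longrightarrow> Poly_Mapping.keys (phi u) \<subseteq> {t. fst (snd t) = 0}" unfolding AC_def by (rule kAC)
  have mA1: "gA ^ i \<in> AB" for i unfolding AB_def by (rule in_gen_lift gA_in)+
  have mA2: "gA ^ i \<in> AC" for i unfolding AC_def by (rule in_gen_lift gA_in)+
  have mB1: "gB ^ i \<in> AB" for i unfolding AB_def by (rule in_gen_lift gB_in1)+
  have mB2: "gB ^ i \<in> BC" for i unfolding BC_def by (rule in_gen_lift gB_in2)+
  have mC1: "gC ^ i \<in> BC" for i unfolding BC_def by (rule in_gen_lift gC_in1)+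
  have mC2: "gC ^ i \<in> AC" for i unfolding AC_def by (rule in_gen_lift gC_in2)+
  have c1: "complement_basis I UNIV (UNIV :: (nat \<times> nat \<times> nat) set) (\<lambda>(i, j, k). gA ^ i * gB ^ j * gC ^ k)"
  proof -
    have "complement_basis I UNIV UNIV (mono3 \<circ> id)" unfolding I_def
      by (rule complement_gen) auto
    then show ?thesis by (simp add: mono3_def)
  qed
  have c2: "complement_basis I AB (UNIV :: (nat \<times> nat) set) (\<lambda>(i, j). gA ^ i * gB ^ j)"
  proof -
    have "complement_basis I AB UNIV (mono3 \<circ> (\<lambda>(i, j). (i, j, 0)))" unfolding I_def
    proof (rule complement_gen)
      show "inj (\<lambda>(i::nat, j::nat). (i, j, 0::nat))" by (auto simp: inj_def)
      fix u assume "u \<in> AB"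
      then show "Poly_Mapping.keys (phi u) \<subseteq> range (\<lambda>(i, j). (i, j, 0))"
        using kAB' rAB by blast
    next
      fix i :: "nat \<times> nat" show "mono3 ((\<lambda>(i, j). (i, j, 0)) i) \<in> AB"
        using mA1 mB1 sAB(1) by (cases i) (auto simp: mono3_def is_subalg_def)
    qed
    moreover have "mono3 \<circ> (\<lambda>(i, j). (i, j, 0)) = (\<lambda>(i, j). gA ^ i * gB ^ j)"
      by (auto simp: mono3_def)
    ultimately show ?thesis by metis
  qed

  have c3: "complement_basis I BC (UNIV :: (nat \<times> nat) set) (\<lambda>(j, k). gB ^ j * gC ^ k)"
  proof -
    have "complement_basis I BC UNIV (mono3 \<circ> (\<lambda>(j, k). (0, j, k)))" unfolding I_def
    proof (rule complement_gen)
      show "inj (\<lambda>(j::nat, k::nat). (0::nat, j, k))" by (auto simp: inj_def)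
      fix u assume "u \<in> BC"
      then show "Poly_Mapping.keys (phi u) \<subseteq> range (\<lambda>(j, k). (0, j, k))"
        using kBC' rBC by blast
    next
      fix i :: "nat \<times> nat" show "mono3 ((\<lambda>(j, k). (0, j, k)) i) \<in> BC"
        using mB2 mC1 sAB(2) by (cases i) (auto simp: mono3_def is_subalg_def)
    qed
    moreover have "mono3 \<circ> (\<lambda>(j, k). (0, j, k)) = (\<lambda>(j, k). gB ^ j * gC ^ k)"
      by (auto simp: mono3_def)
    ultimately show ?thesis by metis
  qed
  have c4: "complement_basis I AC (UNIV :: (nat \<times> nat) set) (\<lambda>(i, k). gA ^ i * gC ^ k)"
  proof -
    have "complement_basis I AC UNIV (mono3 \<circ> (\<lambda>(i, k). (i, 0, k)))" unfolding I_def
    proof (rule complement_gen)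
      show "inj (\<lambda>(i::nat, k::nat). (i, 0::nat, k))" by (auto simp: inj_def)
      fix u assume "u \<in> AC"
      then show "Poly_Mapping.keys (phi u) \<subseteq> range (\<lambda>(i, k). (i, 0, k))"
        using kAC' rAC by blast
    next
      fix i :: "nat \<times> nat" show "mono3 ((\<lambda>(i, k). (i, 0, k)) i) \<in> AC"
        using mA2 mC2 sAB(3) by (cases i) (auto simp: mono3_def is_subalg_def)
    qed
    moreover have "mono3 \<circ> (\<lambda>(i, k). (i, 0, k)) = (\<lambda>(i, k). gA ^ i * gC ^ k)"
      by (auto simp: mono3_def)
    ultimately show ?thesis by metis
  qed
  have c5: "complement_basis I (AB \<inter> AC) (UNIV :: nat set) (\<lambda>i. gA ^ i)"
  proof -
    have "complement_basis I (AB \<inter> AC) UNIV (mono3 \<circ> (\<lambda>i. (i, 0, 0)))" unfolding I_def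
    proof (rule complement_gen)
      show "inj (\<lambda>i::nat. (i, 0::nat, 0::nat))" by (auto simp: inj_def)
      fix u assume "u \<in> AB \<inter> AC"
      then show "Poly_Mapping.keys (phi u) \<subseteq> range (\<lambda>i. (i, 0, 0))"
        using kAB' kAC' rA by blast
    next
      fix i :: nat show "mono3 ((\<lambda>i. (i, 0, 0)) i) \<in> AB \<inter> AC"
        using mA1 mA2 by (simp add: mono3_def)
    qed
    moreover have "mono3 \<circ> (\<lambda>i. (i, 0, 0)) = (\<lambda>i. gA ^ i)"
      by (auto simp: mono3_def)
    ultimately show ?thesis by metis
  qed
  have c6: "complement_basis I (AB \<inter> BC) (UNIV :: nat set) (\<lambda>j. gB ^ j)"
  proof -
    have "complement_basis I (AB \<inter> BC) UNIV (mono3 \<circ> (\<lambda>j. (0, j, 0)))" unfolding I_def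
    proof (rule complement_gen)
      show "inj (\<lambda>j::nat. (0::nat, j, 0::nat))" by (auto simp: inj_def)
      fix u assume "u \<in> AB \<inter> BC"
      then show "Poly_Mapping.keys (phi u) \<subseteq> range (\<lambda>j. (0, j, 0))"
        using kAB' kBC' rB by blast
    next
      fix i :: nat show "mono3 ((\<lambda>j. (0, j, 0)) i) \<in> AB \<inter> BC"
        using mB1 mB2 by (simp add: mono3_def)
    qed
    moreover have "mono3 \<circ> (\<lambda>j. (0, j, 0)) = (\<lambda>j. gB ^ j)"
      by (auto simp: mono3_def)
    ultimately show ?thesis by metis
  qed
  have c7: "complement_basis I (AC \<inter> BC) (UNIV :: nat set) (\<lambda>k. gC ^ k)"
  proof -
    have "complement_basis I (AC \<inter> BC) UNIV (mono3 \<circ> (\<lambda>k. (0, 0, k)))" unfolding I_def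
    proof (rule complement_gen)
      show "inj (\<lambda>k::nat. (0::nat, 0::nat, k))" by (auto simp: inj_def)
      fix u assume "u \<in> AC \<inter> BC"
      then show "Poly_Mapping.keys (phi u) \<subseteq> range (\<lambda>k. (0, 0, k))"
        using kAC' kBC' rC by blast
    next
      fix i :: nat show "mono3 ((\<lambda>k. (0, 0, k)) i) \<in> AC \<inter> BC"
        using mC1 mC2 by (simp add: mono3_def)
    qed
    moreover have "mono3 \<circ> (\<lambda>k. (0, 0, k)) = (\<lambda>k. gC ^ k)"
      by (auto simp: mono3_def)
    ultimately show ?thesis by metis
  qed
  have c8: "complement_basis I (AB \<inter> BC \<inter> AC) (UNIV :: unit set) (\<lambda>_. 1)"
  proof -
    have "complement_basis I (AB \<inter> BC \<inter> AC) UNIV (mono3 \<circ> (\<lambda>_::unit. (0, 0, 0)))" unfolding I_def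
    proof (rule complement_gen)
      show "inj (\<lambda>_::unit. (0::nat, 0::nat, 0::nat))" by (auto simp: inj_def)
      fix u assume "u \<in> AB \<inter> BC \<inter> AC"
      then show "Poly_Mapping.keys (phi u) \<subseteq> range (\<lambda>_::unit. (0, 0, 0))"
        using kAB' kBC' kAC' r1 by blast
    next
      fix i :: unit show "mono3 ((\<lambda>_::unit. (0, 0, 0)) i) \<in> AB \<inter> BC \<inter> AC"
        using mA1[of 0] mA2[of 0] mB2[of 0] by (simp add: mono3_def)
    qed
    moreover have "mono3 \<circ> (\<lambda>_::unit. (0, 0, 0)) = (\<lambda>_::unit. 1 :: 'k free_alg)"
      by (auto simp: mono3_def)
    ultimately show ?thesis by metis
  qed
  show ?thesis
    using c1 c2 c3 c4 c5 c6 c7 c8 IAB IBC IAC sAB is_subalg_UNIV is_subalg_Int by blast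
qed


end
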